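(* For every integer $n\ge 2$ there exist a finite alphabet $\Sigma_n$ and an $n$-state 1gQFA $Q_n$ over $\Sigma_n$ such that, taking strict cutpoint $1/2$, every one-way PFA $P$ over $\Sigma_n$ for which there is a strict cutpoint $\mu\in[0,1)$ with $L(P,\mu)=L(Q_n,1/2)$ has at least $n^2-1$ states.
   Context: Let $\Sigma$ be a finite alphabet and $\Sigma^\ast$ the set of finite words over it. Probabilistic computations are written with row vectors; stochastic matrices act on the right. A one-way PFA (probabilistic finite automaton, end-marker model) over $\Sigma$ is a tuple $P=(S,\Sigma,\pi,\{P_\sigma\}_{\sigma\in\Sigma},P_{\#},F)$, where $S$ is a finite state set (its number of states is $|S|$), $\pi$ is an initial probability distribution (row vector) on $S$, each $P_\sigma$ and $P_\#$ are row-stochastic $|S|\times|S|$ matrices, and $F\subseteq S$. For $w=\sigma_1\cdots\sigma_m$, $f_P(w)=\pi P_{\sigma_1}\cdots P_{\sigma_m}P_\#\mathbf 1_F$, where $\mathbf 1_F$ is the indicator column vector of $F$. For $\mu\in[0,1)$, $L(P,\mu)=\{w\in\Sigma^\ast: f_P(w)>\mu\}$. An $n$-state 1gQFA (measure-once one-way general quantum finite automaton) over $\Sigma$ is a tuple $Q=(\mathcal H,\Sigma,\rho_0,\{\mathcal E_\sigma\}_{\sigma\in\Sigma},P_{\mathrm{acc}})$ where $\mathcal H\cong\mathbb C^n$, $\rho_0$ is a density operator on $\mathcal H$, each $\mathcal E_\sigma$ is a completely positive trace-preserving map on the operators on $\mathcal H$, and $P_{\mathrm{acc}}$ is an orthogonal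 projector on $\mathcal H$. For $w=\sigma_1\cdots\sigma_m$, $\rho_w=\mathcal E_{\sigma_m}\circ\cdots\circ\mathcal E_{\sigma_1}(\rho_0)$ and $f_Q(w)=\operatorname{Tr}(P_{\mathrm{acc}}\rho_w)$. For $\lambda\in[0,1)$, $L(Q,\lambda)=\{w\in\Sigma^\ast: f_Q(w)>\lambda\}$. *)

theory Defs
  imports Complex_Main "Jordan_Normal_Form.Matrix"
begin

text \<open>States are indexed by {0..<k}; a distribution is a real vector of dimension k,
  treated as a row vector. Row-stochastic matrices act on the right.\<close>

definition prob_vec :: "nat \<Rightarrow> real vec \<Rightarrow> bool" where
  "prob_vec k v \<longleftrightarrow> v \<in> carrier_vec k \<and> (\<forall>i<k. 0 \<le> v $ i) \<and> (\<Sum>i<k. v $ i) = 1"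

definition row_stochastic :: "nat \<Rightarrow> real mat \<Rightarrow> bool" where
  "row_stochastic k M \<longleftrightarrow> M \<in> carrier_mat k k \<and>
     (\<forall>i<k. (\<forall>j<k. 0 \<le> M $$ (i,j)) \<and> (\<Sum>j<k. M $$ (i,j)) = 1)"

definition row_times :: "real vec \<Rightarrow> real mat \<Rightarrow> real vec" where
  "row_times v M = vec (dim_col M) (\<lambda>j. \<Sum>i<dim_vec v. v $ i * M $$ (i,j))"

definition is_pfa ::
  "nat set \<Rightarrow> nat \<Rightarrow> real vec \<Rightarrow> (nat \<Rightarrow> real mat) \<Rightarrow> real mat \<Rightarrow> nat set \<Rightarrow> bool" where
  "is_pfa \<Sigma> k \<pi> Ps Pend F \<longleftrightarrow> prob_vec k \<pi> \<and> (\<forall>\<sigma>\<in>\<Sigma>. row_stochastic k (Ps \<sigma>)) \<and>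
     row_stochastic k Pend \<and> F \<subseteq> {..<k}"

definition pfa_prob ::
  "real vec \<Rightarrow> (nat \<Rightarrow> real mat) \<Rightarrow> real mat \<Rightarrow> nat set \<Rightarrow> nat list \<Rightarrow> real" where
  "pfa_prob \<pi> Ps Pend F w =
     (let r = row_times (foldl (\<lambda>v \<sigma>. row_times v (Ps \<sigma>)) \<pi> w) Pend
      in \<Sum>i\<in>F. r $ i)"

definition pfa_lang ::
  "nat set \<Rightarrow> real vec \<Rightarrow> (nat \<Rightarrow> real mat) \<Rightarrow> real mat \<Rightarrow> nat set \<Rightarrow> real \<Rightarrow> nat list set" where
  "pfa_lang \<Sigma> \<pi> Ps Pend F \<mu> = {w \<in> lists \<Sigma>. pfa_prob \<pi> Ps Pend F w > \<mu>}"

definition mtrace :: "complex mat \<Rightarrow> complex" where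
  "mtrace A = (\<Sum>i<dim_row A. A $$ (i,i))"

definition adj :: "complex mat \<Rightarrow> complex mat" where
  "adj A = mat (dim_col A) (dim_row A) (\<lambda>(i,j). cnj (A $$ (j,i)))"

definition psd :: "nat \<Rightarrow> complex mat \<Rightarrow> bool" where
  "psd n A \<longleftrightarrow> A \<in> carrier_mat n n \<and> adj A = A \<and>
     (\<forall>v\<in>carrier_vec n. let q = (\<Sum>i<n. cnj (v $ i) * (A *\<^sub>v v) $ i) in Im q = 0 \<and> 0 \<le> Re q)"

definition density_op :: "nat \<Rightarrow> complex mat \<Rightarrow> bool" where
  "density_op n \<rho> \<longleftrightarrow> psd n \<rho> \<and> mtrace \<rho> = 1"

definition orth_projector :: "nat \<Rightarrow> complex mat \<Rightarrow> bool" where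
  "orth_projector n P \<longleftrightarrow> P \<in> carrier_mat n n \<and> P * P = P \<and> adj P = P"

definition linear_superop :: "nat \<Rightarrow> (complex mat \<Rightarrow> complex mat) \<Rightarrow> bool" where
  "linear_superop n E \<longleftrightarrow>
     (\<forall>A\<in>carrier_mat n n. E A \<in> carrier_mat n n) \<and>
     (\<forall>A\<in>carrier_mat n n. \<forall>B\<in>carrier_mat n n. E (A + B) = E A + E B) \<and>
     (\<forall>A\<in>carrier_mat n n. \<forall>c. E (c \<cdot>\<^sub>m A) = c \<cdot>\<^sub>m E A)"

text \<open>(id_k \<otimes> E) applied to a (k n) x (k n) matrix viewed as k x k array of n x n blocks.\<close>
definition ampliate :: "nat \<Rightarrow> nat \<Rightarrow> (complex mat \<Rightarrow> complex mat) \<Rightarrow> complex mat \<Rightarrow> complex mat" where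
  "ampliate k n E M = mat (k * n) (k * n) (\<lambda>(a,b).
     E (mat n n (\<lambda>(c,d). M $$ ((a div n) * n + c, (b div n) * n + d))) $$ (a mod n, b mod n))"

definition completely_positive :: "nat \<Rightarrow> (complex mat \<Rightarrow> complex mat) \<Rightarrow> bool" where
  "completely_positive n E \<longleftrightarrow>
     (\<forall>k\<ge>1. \<forall>M. psd (k * n) M \<longrightarrow> psd (k * n) (ampliate k n E M))"

definition trace_preserving :: "nat \<Rightarrow> (complex mat \<Rightarrow> complex mat) \<Rightarrow> bool" where
  "trace_preserving n E \<longleftrightarrow> (\<forall>A\<in>carrier_mat n n. mtrace (E A) = mtrace A)"

definition cptp :: "nat \<Rightarrow> (complex mat \<Rightarrow> complex mat) \<Rightarrow> bool" where
  "cptp n E \<longleftrightarrow> linear_superop n E \<and> completely_positive n E \<and> trace_preserving n E"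

definition is_1gqfa ::
  "nat set \<Rightarrow> nat \<Rightarrow> complex mat \<Rightarrow> (nat \<Rightarrow> complex mat \<Rightarrow> complex mat) \<Rightarrow> complex mat \<Rightarrow> bool" where
  "is_1gqfa \<Sigma> n \<rho>0 Es Pacc \<longleftrightarrow> density_op n \<rho>0 \<and> (\<forall>\<sigma>\<in>\<Sigma>. cptp n (Es \<sigma>)) \<and> orth_projector n Pacc"

definition qfa_prob ::
  "complex mat \<Rightarrow> (nat \<Rightarrow> complex mat \<Rightarrow> complex mat) \<Rightarrow> complex mat \<Rightarrow> nat list \<Rightarrow> real" where
  "qfa_prob \<rho>0 Es Pacc w = Re (mtrace (Pacc * foldl (\<lambda>\<rho> \<sigma>. Es \<sigma> \<rho>) \<rho>0 w))"

definition qfa_lang ::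
  "nat set \<Rightarrow> complex mat \<Rightarrow> (nat \<Rightarrow> complex mat \<Rightarrow> complex mat) \<Rightarrow> complex mat \<Rightarrow> real \<Rightarrow> nat list set" where
  "qfa_lang \<Sigma> \<rho>0 Es Pacc c = {w \<in> lists \<Sigma>. qfa_prob \<rho>0 Es Pacc w > c}"

end

theory Submission imports Defs "Jordan_Normal_Form.Determinant" "HOL-Library.Nat_Bijection" begin

definition trpf :: "nat \<Rightarrow> (nat \<Rightarrow> nat \<Rightarrow> complex) \<Rightarrow> (nat \<Rightarrow> nat \<Rightarrow> complex) \<Rightarrow> complex" where
  "trpf n B K = (\<Sum>r<n. \<Sum>s<n. B r s * K s r)"

definition hermf :: "nat \<Rightarrow> (nat \<Rightarrow> nat \<Rightarrow> complex) \<Rightarrow> bool" where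
  "hermf n B \<longleftrightarrow> (\<forall>r<n. \<forall>s<n. B s r = cnj (B r s))"

definition qf :: "nat \<Rightarrow> (nat \<Rightarrow> nat \<Rightarrow> complex) \<Rightarrow> (nat \<Rightarrow> complex) \<Rightarrow> complex" where
  "qf n B u = (\<Sum>r<n. \<Sum>s<n. cnj (u r) * B r s * u s)"

definition psdq :: "nat \<Rightarrow> (nat \<Rightarrow> nat \<Rightarrow> complex) \<Rightarrow> bool" where
  "psdq n B \<longleftrightarrow> (\<forall>u. 0 \<le> Re (qf n B u))"

definition goodK :: "nat \<Rightarrow> (nat \<Rightarrow> nat \<Rightarrow> complex) \<Rightarrow> bool" where
  "goodK n K \<longleftrightarrow> (\<forall>r s. K s r = cnj (K r s)) \<and>
     (\<forall>B. hermf n B \<and> psdq n B \<longrightarrow> 0 \<le> Re (trpf n B K))"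

lemma sum_kn: "(\<Sum>a<k*n. (f::nat\<Rightarrow>'a::comm_monoid_add) a) = (\<Sum>x<k. \<Sum>r<n. f (x*n+r))"
proof -
  have "(\<Sum>a<k*n. f a) = (\<Sum>x<k. sum f {x*n..<x*n+n})"
    using sum.nat_group[of f n k] by simp
  also have "\<dots> = (\<Sum>x<k. \<Sum>r<n. f (x*n+r))"
  proof (rule sum.cong[OF refl])
    fix x
    show "sum f {x*n..<x*n+n} = (\<Sum>r<n. f (x*n+r))"
      using sum.shift_bounds_nat_ivl[of f 0 "x*n" n]
      by (simp add: atLeast0LessThan add.commute)
  qed
  finally show ?thesis .
qed

lemma kn_less: "x < k \<Longrightarrow> i < (n::nat) \<Longrightarrow> x*n+i < k*n"
proof -
  assume "x < k" "i < n"
  then have "x*n + i < x*n + n" by simp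
  also have "\<dots> = Suc x * n" by simp
  also have "\<dots> \<le> k * n" using \<open>x<k\<close> by (intro mult_right_mono) auto
  finally show ?thesis .
qed

lemma sum_two:
  assumes "r \<noteq> s" "r < (n::nat)" "s < n" "\<And>i. i \<noteq> r \<Longrightarrow> i \<noteq> s \<Longrightarrow> f i = 0"
  shows "(\<Sum>i<n. f i) = f r + f s"
proof -
  have "(\<Sum>i<n. f i) = (\<Sum>i\<in>{r,s}. f i)"
    by (rule sum.mono_neutral_right) (use assms in auto)
  then show ?thesis using assms by simp
qed

lemma sum_one:
  assumes "r < (n::nat)" "\<And>i. i \<noteq> r \<Longrightarrow> f i = 0"
  shows "(\<Sum>i<n. f i) = f r"
proof -
  have "(\<Sum>i<n. f i) = (\<Sum>i\<in>{r}. f i)"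
    by (rule sum.mono_neutral_right) (use assms in auto)
  then show ?thesis by simp
qed

lemma qf_one:
  assumes "j < n" "\<And>i. i \<noteq> j \<Longrightarrow> w i = 0"
  shows "qf n K w = cnj (w j) * K j j * w j"
  unfolding qf_def
  by (subst sum_one[OF assms(1)], simp add: assms(2), subst sum_one[OF assms(1)], simp_all add: assms(2))

lemma qf_two:
  assumes "j \<noteq> l" "j < n" "l < n" "\<And>i. i \<noteq> j \<Longrightarrow> i \<noteq> l \<Longrightarrow> w i = 0"
  shows "qf n K w = cnj (w j) * K j j * w j + cnj (w j) * K j l * w l
     + cnj (w l) * K l j * w j + cnj (w l) * K l l * w l"
  unfolding qf_def
  by (subst sum_two[OF assms(1-3)], simp add: assms(4), (subst sum_two[OF assms(1-3)], simp_all add: assms(4))+)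

lemma psdq_diag:
  assumes "psdq n B" "r < n"
  shows "0 \<le> Re (B r r)"
proof -
  have "qf n B (\<lambda>i. if i = r then 1 else 0) = B r r"
    by (subst qf_one[OF assms(2)]) auto
  then show ?thesis using assms(1) unfolding psdq_def by metis
qed


lemma herm_diag_real:
  assumes "hermf n B" "r < n"
  shows "B r r = complex_of_real (Re (B r r))"
proof -
  have e: "B r r = cnj (B r r)" using assms unfolding hermf_def by blast
  have "Im (B r r) = Im (cnj (B r r))" by (rule arg_cong[OF e])
  then have "Im (B r r) = - Im (B r r)" by (simp only: cnj.sel)
  then have "Im (B r r) = 0" by simp
  then show ?thesis by (simp add: complex_eq_iff)
qed

lemma offdiag_bound:
  assumes h: "hermf n B" and p: "psdq n B" and r: "r < n" and s: "s < n"
  shows "cmod (B r s) \<le> (Re (B r r) + Re (B s s)) / 2"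
proof (cases "r = s")
  case True
  have "cmod (B r r) = \<bar>Re (B r r)\<bar>"
    by (subst herm_diag_real[OF h r]) (simp only: norm_of_real)
  then show ?thesis using True psdq_diag[OF p r] by simp
next
  case False
  show ?thesis
  proof (cases "B r s = 0")
    case True
    then show ?thesis using psdq_diag[OF p r] psdq_diag[OF p s] by simp
  next
    case nz: False
    define b where "b = B r s"
    define z where "z = cnj b / complex_of_real (cmod b)"
    define u where "u = (\<lambda>i. if i = r then 1 else if i = s then - z else (0::complex))"
    have bsr: "B s r = cnj b" using h r s unfolding hermf_def b_def by blast
    have nb: "cmod b \<noteq> 0" using nz b_def by simp
    have cz: "cmod z = 1" unfolding z_def norm_divide complex_mod_cnj norm_of_real using nb by simp
    have "z * cnj z = complex_of_real ((cmod z) ^ 2)" by (rule complex_norm_square[symmetric])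
    then have zz: "cnj z * z = 1" using cz by (simp add: mult.commute)
    have bb: "b * cnj b = complex_of_real ((cmod b) ^ 2)" by (rule complex_norm_square[symmetric])
    have "b * z = (b * cnj b) / complex_of_real (cmod b)" unfolding z_def by simp
    also have "\<dots> = complex_of_real ((cmod b) ^ 2) / complex_of_real (cmod b)"
      unfolding bb ..
    also have "\<dots> = complex_of_real (cmod b)" using nb by (simp add: power2_eq_square)
    finally have bz: "b * z = complex_of_real (cmod b)" .
    have bz2: "cnj z * cnj b = complex_of_real (cmod b)"
      using arg_cong[OF bz, of cnj] by (simp add: mult.commute)
    have "qf n B u = cnj (u r) * B r r * u r + cnj (u r) * B r s * u s
       + cnj (u s) * B s r * u r + cnj (u s) * B s s * u s"
      by (rule qf_two[OF False r s]) (auto simp: u_def)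
    also have "\<dots> = B r r - b * z - cnj z * cnj b + (cnj z * z) * B s s"
      using False by (simp add: u_def bsr b_def[symmetric] algebra_simps)
    also have "\<dots> = B r r + B s s - 2 * complex_of_real (cmod b)"
      unfolding zz bz bz2 by (simp add: algebra_simps)
    finally have eq: "qf n B u = B r r + B s s - 2 * complex_of_real (cmod b)" .
    have "0 \<le> Re (qf n B u)" using p unfolding psdq_def by blast
    then have "0 \<le> Re (B r r + B s s - 2 * complex_of_real (cmod b))"
      by (simp only: eq)
    then show ?thesis by (simp add: b_def)
  qed
qed


lemma trpf_cong: "(\<And>i j. i < n \<Longrightarrow> j < n \<Longrightarrow> B i j = B' i j) \<Longrightarrow> trpf n B K = trpf n B' K"
  unfolding trpf_def by (intro sum.cong refl) auto

lemma trpf_lin: "trpf n B (\<lambda>r s. a * K1 r s + b * K2 r s) = a * trpf n B K1 + b * trpf n B K2"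
  unfolding trpf_def by (simp add: sum.distrib sum_distrib_left algebra_simps)

lemma trpf_Id: "trpf n B (\<lambda>r s. if r = s then 1 else 0) = (\<Sum>r<n. B r r)"
  unfolding trpf_def by (intro sum.cong refl) (simp add: if_distrib cong: if_cong)

lemma goodK_Id: "goodK n (\<lambda>r s. if r = s then 1 else 0)"
  unfolding goodK_def
proof (intro conjI allI impI)
  fix B assume "hermf n B \<and> psdq n B"
  then have "\<And>r. r < n \<Longrightarrow> 0 \<le> Re (B r r)" using psdq_diag by blast
  then show "0 \<le> Re (trpf n B (\<lambda>r s. if r = s then 1 else 0))"
    unfolding trpf_Id Re_sum by (intro sum_nonneg) auto
qed auto

lemma goodK_0: "goodK n (\<lambda>r s. 0)"
  unfolding goodK_def trpf_def by simp

lemma sum_swap3: "(\<Sum>j\<in>J. \<Sum>x\<in>X. \<Sum>y\<in>Y. g j x y) = (\<Sum>x\<in>X. \<Sum>y\<in>Y. \<Sum>j\<in>J. g j x y)"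
proof -
  have "(\<Sum>j\<in>J. \<Sum>x\<in>X. \<Sum>y\<in>Y. g j x y) = (\<Sum>x\<in>X. \<Sum>j\<in>J. \<Sum>y\<in>Y. g j x y)"
    by (rule sum.swap)
  also have "\<dots> = (\<Sum>x\<in>X. \<Sum>y\<in>Y. \<Sum>j\<in>J. g j x y)"
    by (rule sum.cong[OF refl], rule sum.swap)
  finally show ?thesis .
qed

lemma sum_swap4: "(\<Sum>i\<in>I. \<Sum>j\<in>J. \<Sum>x\<in>X. \<Sum>y\<in>Y. f i j x y) = (\<Sum>x\<in>X. \<Sum>y\<in>Y. \<Sum>i\<in>I. \<Sum>j\<in>J. f i j x y)"
proof -
  have "(\<Sum>i\<in>I. \<Sum>j\<in>J. \<Sum>x\<in>X. \<Sum>y\<in>Y. f i j x y) = (\<Sum>i\<in>I. \<Sum>x\<in>X. \<Sum>y\<in>Y. \<Sum>j\<in>J. f i j x y)"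
    by (rule sum.cong[OF refl], rule sum_swap3)
  also have "\<dots> = (\<Sum>x\<in>X. \<Sum>y\<in>Y. \<Sum>i\<in>I. \<Sum>j\<in>J. f i j x y)"
    by (rule sum_swap3)
  finally show ?thesis .
qed

lemma sum_swap_mix: "(\<Sum>x\<in>X. \<Sum>i\<in>I. \<Sum>y\<in>Y. \<Sum>j\<in>J. f x i y j) = (\<Sum>i\<in>I. \<Sum>j\<in>J. \<Sum>x\<in>X. \<Sum>y\<in>Y. f x i y j)"
proof -
  have "(\<Sum>x\<in>X. \<Sum>i\<in>I. \<Sum>y\<in>Y. \<Sum>j\<in>J. f x i y j) = (\<Sum>i\<in>I. \<Sum>x\<in>X. \<Sum>y\<in>Y. \<Sum>j\<in>J. f x i y j)"
    by (rule sum.swap)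
  also have "\<dots> = (\<Sum>i\<in>I. \<Sum>x\<in>X. \<Sum>j\<in>J. \<Sum>y\<in>Y. f x i y j)"
    by (rule sum.cong[OF refl], rule sum.cong[OF refl], rule sum.swap)
  also have "\<dots> = (\<Sum>i\<in>I. \<Sum>j\<in>J. \<Sum>x\<in>X. \<Sum>y\<in>Y. f x i y j)"
    by (rule sum.cong[OF refl], rule sum.swap)
  finally show ?thesis .
qed

lemma goodK_M:
  assumes hT: "\<And>r s. T s r = cnj (T r s)"
    and bT: "\<And>r s. r < n \<Longrightarrow> s < n \<Longrightarrow> cmod (T r s) \<le> 4"
    and e0: "0 \<le> e" and e1: "8 * e * real n \<le> 1"
  shows "goodK n (\<lambda>r s. (if r = s then 1/2 else 0) + complex_of_real e * T r s)"
  unfolding goodK_def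
proof (intro conjI allI impI)
  fix r s
  show "(if s = r then 1 / 2 else 0) + complex_of_real e * T s r =
        cnj ((if r = s then 1 / 2 else 0) + complex_of_real e * T r s)"
    using hT[of s r] by auto
next
  fix B assume hp: "hermf n B \<and> psdq n B"
  then have h: "hermf n B" and p: "psdq n B" by auto
  define S where "S = (\<Sum>r<n. Re (B r r))"
  define E where "E = trpf n B T"
  have S0: "0 \<le> S" unfolding S_def using psdq_diag[OF p] by (intro sum_nonneg) auto
  have K: "(\<lambda>r s. (if r = s then 1/2 else 0) + complex_of_real e * T r s)
     = (\<lambda>r s. (1/2) * (if r = s then 1 else 0) + complex_of_real e * T r s)"
    by (intro ext) auto
  have tr: "trpf n B (\<lambda>r s. (if r = s then 1/2 else 0) + complex_of_real e * T r s)
     = (1/2) * (\<Sum>r<n. B r r) + complex_of_real e * E"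
    unfolding K trpf_lin trpf_Id E_def ..
  have "cmod E \<le> (\<Sum>r<n. cmod (\<Sum>s<n. B r s * T s r))"
    unfolding E_def trpf_def by (rule norm_sum)
  also have "\<dots> \<le> (\<Sum>r<n. \<Sum>s<n. cmod (B r s) * cmod (T s r))"
    by (intro sum_mono order_trans[OF norm_sum]) (simp add: norm_mult)
  also have "\<dots> \<le> (\<Sum>r<n. \<Sum>s<n. ((Re (B r r) + Re (B s s)) / 2) * 4)"
    by (intro sum_mono mult_mono offdiag_bound[OF h p] bT) (auto intro!: add_nonneg_nonneg psdq_diag[OF p])
  also have "\<dots> = 4 * real n * S"
    unfolding S_def
    by (simp add: sum.distrib sum_divide_distrib[symmetric] sum_distrib_left[symmetric] sum_distrib_right[symmetric] algebra_simps)
  finally have cE: "cmod E \<le> 4 * real n * S" .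
  have "- (4 * real n * S) \<le> Re E" using cE abs_Re_le_cmod[of E] by linarith
  then have "- (e * (4 * real n * S)) \<le> e * Re E" using mult_left_mono[OF _ e0] by (metis mult_minus_right)
  moreover have "e * (4 * real n * S) \<le> S / 2"
  proof -
    have "e * (4 * real n * S) = (8 * e * real n) * S / 2" by simp
    also have "\<dots> \<le> 1 * S / 2" using e1 S0 by (intro divide_right_mono mult_right_mono) auto
    finally show ?thesis by simp
  qed
  moreover have "Re (trpf n B (\<lambda>r s. (if r = s then 1/2 else 0) + complex_of_real e * T r s)) = S / 2 + e * Re E"
    unfolding tr S_def by (simp add: Re_sum)
  ultimately show "0 \<le> Re (trpf n B (\<lambda>r s. (if r = s then 1/2 else 0) + complex_of_real e * T r s))"
    by linarith
qed


definition Ablk :: "complex mat \<Rightarrow> nat \<Rightarrow> nat \<Rightarrow> nat \<Rightarrow> nat \<Rightarrow> nat \<Rightarrow> complex" where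
  "Ablk A n x y = (\<lambda>i j. A $$ (x*n+i, y*n+j))"

lemma adj_herm:
  assumes "A \<in> carrier_mat N N" "adj A = A" "p < N" "q < N"
  shows "A $$ (p,q) = cnj (A $$ (q,p))"
proof -
  have "adj A $$ (p,q) = cnj (A $$ (q,p))" using assms(1,3,4) unfolding adj_def by auto
  then show ?thesis unfolding assms(2) .
qed

lemma quad_expand:
  assumes "X \<in> carrier_mat N N" "v \<in> carrier_vec N"
  shows "(\<Sum>a<N. cnj (v$a) * (X *\<^sub>v v)$a) = (\<Sum>a<N. \<Sum>b<N. cnj (v$a) * X$$(a,b) * v$b)"
  using assms by (auto simp: scalar_prod_def atLeast0LessThan sum_distrib_left mult.assoc intro!: sum.cong)

lemma herm_quad_real:
  assumes X: "X \<in> carrier_mat N N" and h: "adj X = X" and v: "v \<in> carrier_vec N"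
  shows "Im (\<Sum>a<N. cnj (v$a) * (X *\<^sub>v v)$a) = 0"
proof -
  define q where "q = (\<Sum>a<N. \<Sum>b<N. cnj (v$a) * X$$(a,b) * v$b)"
  have "cnj q = (\<Sum>a<N. \<Sum>b<N. cnj (cnj (v$a) * X$$(a,b) * v$b))"
    unfolding q_def by (simp only: cnj_sum)
  also have "\<dots> = (\<Sum>a<N. \<Sum>b<N. v$a * X$$(b,a) * cnj (v$b))"
  proof (intro sum.cong refl)
    fix a b assume "a \<in> {..<N}" "b \<in> {..<N}"
    then have e: "X$$(b,a) = cnj (X$$(a,b))" using adj_herm[OF X h, of b a] by auto
    show "cnj (cnj (v$a) * X$$(a,b) * v$b) = v$a * X$$(b,a) * cnj (v$b)"
      unfolding e by simp
  qed
  also have "\<dots> = (\<Sum>b<N. \<Sum>a<N. v$a * X$$(b,a) * cnj (v$b))" by (rule sum.swap)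
  also have "\<dots> = q" unfolding q_def by (intro sum.cong refl) (simp add: mult_ac)
  finally have "cnj q = q" .
  then have "Im (cnj q) = Im q" by (rule arg_cong)
  then have "- Im q = Im q" by (simp only: cnj.sel)
  then have "Im q = 0" by simp
  then show ?thesis unfolding q_def quad_expand[OF X v] .
qed

lemma divmod_kn: "r < n \<Longrightarrow> (x*n+r) div (n::nat) = x \<and> (x*n+r) mod n = r"
  by auto

lemma cp_term:
  assumes A: "A \<in> carrier_mat (k*n) (k*n)" and pA: "psd (k*n) A" and K: "goodK n K" and c: "0 \<le> c"
  shows "0 \<le> Re (\<Sum>a<k*n. \<Sum>b<k*n. cnj (v a) * (trpf n (Ablk A n (a div n) (b div n)) K
            * complex_of_real c * w (a mod n) * cnj (w (b mod n))) * v b)"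
proof -
  define C where "C x = (\<Sum>t<n. cnj (w t) * v (x*n+t))" for x
  define B where "B i j = (\<Sum>x<k. \<Sum>y<k. cnj (C x) * C y * A $$ (x*n+i, y*n+j))" for i j
  have hA: "\<And>p q. p < k*n \<Longrightarrow> q < k*n \<Longrightarrow> A $$ (p,q) = cnj (A $$ (q,p))"
    using adj_herm[OF A] pA unfolding psd_def by blast
  have s1: "(\<Sum>a<k*n. \<Sum>b<k*n. F a b) = (\<Sum>x<k. \<Sum>r<n. \<Sum>y<k. \<Sum>t<n. F (x*n+r) (y*n+t))"
    for F :: "nat \<Rightarrow> nat \<Rightarrow> complex" by (simp only: sum_kn)
  have "(\<Sum>a<k*n. \<Sum>b<k*n. cnj (v a) * (trpf n (Ablk A n (a div n) (b div n)) K
            * complex_of_real c * w (a mod n) * cnj (w (b mod n))) * v b)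
     = (\<Sum>x<k. \<Sum>r<n. \<Sum>y<k. \<Sum>t<n. cnj (v (x*n+r)) * (trpf n (Ablk A n x y) K
            * complex_of_real c * w r * cnj (w t)) * v (y*n+t))"
    unfolding s1 by (intro sum.cong refl) (simp add: divmod_kn)
  also have "\<dots> = (\<Sum>x<k. \<Sum>y<k. \<Sum>r<n. \<Sum>t<n. cnj (v (x*n+r)) * (trpf n (Ablk A n x y) K
            * complex_of_real c * w r * cnj (w t)) * v (y*n+t))"
    by (rule sum.cong[OF refl], rule sum.swap)
  also have "\<dots> = (\<Sum>x<k. \<Sum>y<k. complex_of_real c * (cnj (C x) * C y * trpf n (Ablk A n x y) K))"
  proof (intro sum.cong refl)
    fix x y
    have "cnj (C x) * C y = (\<Sum>r<n. w r * cnj (v (x*n+r))) * (\<Sum>t<n. cnj (w t) * v (y*n+t))"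
      unfolding C_def by (simp add: cnj_sum)
    also have "\<dots> = (\<Sum>r<n. \<Sum>t<n. w r * cnj (v (x*n+r)) * (cnj (w t) * v (y*n+t)))"
      by (rule sum_product)
    finally have e: "cnj (C x) * C y = (\<Sum>r<n. \<Sum>t<n. w r * cnj (v (x*n+r)) * (cnj (w t) * v (y*n+t)))" .
    show "(\<Sum>r<n. \<Sum>t<n. cnj (v (x*n+r)) * (trpf n (Ablk A n x y) K
            * complex_of_real c * w r * cnj (w t)) * v (y*n+t))
        = complex_of_real c * (cnj (C x) * C y * trpf n (Ablk A n x y) K)"
      unfolding e by (simp add: sum_distrib_left sum_distrib_right mult_ac)
  qed
  also have "\<dots> = complex_of_real c * trpf n B K"
  proof -
    have "trpf n B K = (\<Sum>i<n. \<Sum>j<n. \<Sum>x<k. \<Sum>y<k. cnj (C x) * C y * A $$ (x*n+i, y*n+j) * K j i)"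
      unfolding trpf_def B_def by (simp add: sum_distrib_right)
    also have "\<dots> = (\<Sum>x<k. \<Sum>y<k. \<Sum>i<n. \<Sum>j<n. cnj (C x) * C y * A $$ (x*n+i, y*n+j) * K j i)"
      by (rule sum_swap4)
    also have "\<dots> = (\<Sum>x<k. \<Sum>y<k. cnj (C x) * C y * trpf n (Ablk A n x y) K)"
      unfolding trpf_def Ablk_def by (simp add: sum_distrib_left mult_ac)
    finally show ?thesis by (simp add: sum_distrib_left)
  qed
  finally have eq: "(\<Sum>a<k*n. \<Sum>b<k*n. cnj (v a) * (trpf n (Ablk A n (a div n) (b div n)) K
            * complex_of_real c * w (a mod n) * cnj (w (b mod n))) * v b) = complex_of_real c * trpf n B K" .
  have hB: "hermf n B" unfolding hermf_def
  proof (intro allI impI)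
    fix i j assume i: "i < n" and j: "j < n"
    have "cnj (B i j) = (\<Sum>x<k. \<Sum>y<k. C x * cnj (C y) * cnj (A $$ (x*n+i, y*n+j)))"
      unfolding B_def by (simp add: cnj_sum)
    also have "\<dots> = (\<Sum>x<k. \<Sum>y<k. C x * cnj (C y) * A $$ (y*n+j, x*n+i))"
    proof (intro sum.cong refl)
      fix x y assume "x \<in> {..<k}" "y \<in> {..<k}"
      then have l1: "y*n+j < k*n" and l2: "x*n+i < k*n" using kn_less i j by auto
      have "A $$ (y*n+j, x*n+i) = cnj (A $$ (x*n+i, y*n+j))" by (rule hA[OF l1 l2])
      then show "C x * cnj (C y) * cnj (A $$ (x*n+i, y*n+j)) = C x * cnj (C y) * A $$ (y*n+j, x*n+i)"
        by simp
    qed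
    also have "\<dots> = (\<Sum>y<k. \<Sum>x<k. C x * cnj (C y) * A $$ (y*n+j, x*n+i))" by (rule sum.swap)
    also have "\<dots> = B j i" unfolding B_def by (intro sum.cong refl) (simp add: mult_ac)
    finally show "B j i = cnj (B i j)" by simp
  qed
  have pB: "psdq n B" unfolding psdq_def
  proof
    fix u
    define V where "V = vec (k*n) (\<lambda>a. C (a div n) * u (a mod n))"
    have V: "V \<in> carrier_vec (k*n)" unfolding V_def by simp
    have "0 \<le> Re (\<Sum>a<k*n. cnj (V$a) * (A *\<^sub>v V)$a)"
      using pA V unfolding psd_def Let_def by blast
    also have "(\<Sum>a<k*n. cnj (V$a) * (A *\<^sub>v V)$a) = (\<Sum>a<k*n. \<Sum>b<k*n. cnj (V$a) * A$$(a,b) * V$b)"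
      by (rule quad_expand[OF A V])
    also have "\<dots> = (\<Sum>x<k. \<Sum>i<n. \<Sum>y<k. \<Sum>j<n. cnj (C x * u i) * A$$(x*n+i,y*n+j) * (C y * u j))"
      unfolding s1 by (intro sum.cong refl) (simp add: V_def divmod_kn kn_less)
    also have "\<dots> = (\<Sum>i<n. \<Sum>j<n. \<Sum>x<k. \<Sum>y<k. cnj (C x * u i) * A$$(x*n+i,y*n+j) * (C y * u j))"
      by (rule sum_swap_mix)
    also have "\<dots> = qf n B u"
      unfolding qf_def B_def by (intro sum.cong refl) (simp add: sum_distrib_left sum_distrib_right mult_ac)
    finally show "0 \<le> Re (qf n B u)" .
  qed
  have "0 \<le> Re (trpf n B K)" using K hB pB unfolding goodK_def by blast
  then have "0 \<le> Re (complex_of_real c * trpf n B K)" using c by simp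
  then show ?thesis unfolding eq .
qed


definition chan :: "nat \<Rightarrow> (nat\<Rightarrow>nat\<Rightarrow>complex) \<Rightarrow> real \<Rightarrow> (nat\<Rightarrow>complex) \<Rightarrow>
   (nat\<Rightarrow>nat\<Rightarrow>complex) \<Rightarrow> real \<Rightarrow> (nat\<Rightarrow>complex) \<Rightarrow> complex mat \<Rightarrow> complex mat" where
  "chan n K0 c0 w0 K1 c1 w1 A = mat n n (\<lambda>(r,s).
      trpf n (\<lambda>i j. A $$ (i,j)) K0 * complex_of_real c0 * w0 r * cnj (w0 s)
    + trpf n (\<lambda>i j. A $$ (i,j)) K1 * complex_of_real c1 * w1 r * cnj (w1 s))"

lemma trpf_addM: "A \<in> carrier_mat n n \<Longrightarrow> B \<in> carrier_mat n n \<Longrightarrow>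
  trpf n (\<lambda>i j. (A + B) $$ (i,j)) K = trpf n (\<lambda>i j. A $$ (i,j)) K + trpf n (\<lambda>i j. B $$ (i,j)) K"
  unfolding trpf_def by (auto simp: sum.distrib ring_distribs intro!: sum.cong)

lemma trpf_smultM: "A \<in> carrier_mat n n \<Longrightarrow>
  trpf n (\<lambda>i j. (a \<cdot>\<^sub>m A) $$ (i,j)) K = a * trpf n (\<lambda>i j. A $$ (i,j)) K"
  unfolding trpf_def by (auto simp: sum_distrib_left mult_ac intro!: sum.cong)

lemma trpf_mat: "trpf n (\<lambda>i j. mat n n (\<lambda>(c,d). f c d) $$ (i,j)) K = trpf n f K"
  by (rule trpf_cong) simp

lemma trpf_cnj:
  assumes hA: "\<And>p q. p < k*n \<Longrightarrow> q < k*n \<Longrightarrow> A $$ (p,q) = cnj (A $$ (q,p))"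
    and x: "x < k" and y: "y < k" and hK: "\<And>r s. K s r = cnj (K r s)"
  shows "cnj (trpf n (Ablk A n y x) K) = trpf n (Ablk A n x y) K"
proof -
  have "cnj (trpf n (Ablk A n y x) K) = (\<Sum>i<n. \<Sum>j<n. cnj (A $$ (y*n+i, x*n+j)) * cnj (K j i))"
    unfolding trpf_def Ablk_def by (simp add: cnj_sum)
  also have "\<dots> = (\<Sum>i<n. \<Sum>j<n. A $$ (x*n+j, y*n+i) * K i j)"
  proof (intro sum.cong refl)
    fix i j assume "i \<in> {..<n}" "j \<in> {..<n}"
    then have l1: "x*n+j < k*n" and l2: "y*n+i < k*n" using kn_less x y by auto
    have e1: "A $$ (x*n+j, y*n+i) = cnj (A $$ (y*n+i, x*n+j))" by (rule hA[OF l1 l2])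
    have e2: "K i j = cnj (K j i)" by (rule hK)
    show "cnj (A $$ (y*n+i, x*n+j)) * cnj (K j i) = A $$ (x*n+j, y*n+i) * K i j"
      unfolding e1 e2 by simp
  qed
  also have "\<dots> = (\<Sum>j<n. \<Sum>i<n. A $$ (x*n+j, y*n+i) * K i j)" by (rule sum.swap)
  also have "\<dots> = trpf n (Ablk A n x y) K" unfolding trpf_def Ablk_def ..
  finally show ?thesis .
qed

lemma amp_entry:
  assumes a: "a < kk*n" and b: "b < kk*n"
  shows "ampliate kk n (chan n K0 c0 w0 K1 c1 w1) M $$ (a,b) =
     trpf n (Ablk M n (a div n) (b div n)) K0 * complex_of_real c0 * w0 (a mod n) * cnj (w0 (b mod n))
   + trpf n (Ablk M n (a div n) (b div n)) K1 * complex_of_real c1 * w1 (a mod n) * cnj (w1 (b mod n))"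
proof -
  have n: "0 < n" using a by (cases n) auto
  have m: "a mod n < n" "b mod n < n" using n by auto
  have "ampliate kk n (chan n K0 c0 w0 K1 c1 w1) M $$ (a,b) =
     chan n K0 c0 w0 K1 c1 w1 (mat n n (\<lambda>(c,d). M $$ ((a div n)*n+c, (b div n)*n+d))) $$ (a mod n, b mod n)"
    unfolding ampliate_def using a b by simp
  also have "\<dots> = trpf n (Ablk M n (a div n) (b div n)) K0 * complex_of_real c0 * w0 (a mod n) * cnj (w0 (b mod n))
   + trpf n (Ablk M n (a div n) (b div n)) K1 * complex_of_real c1 * w1 (a mod n) * cnj (w1 (b mod n))"
    unfolding chan_def using m by (simp add: trpf_mat Ablk_def)
  finally show ?thesis .
qed

lemma cptp_chan:
  assumes K0: "goodK n K0" and K1: "goodK n K1" and c0: "0 \<le> c0" and c1: "0 \<le> c1"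
    and tp: "\<And>A. A \<in> carrier_mat n n \<Longrightarrow> mtrace (chan n K0 c0 w0 K1 c1 w1 A) = mtrace A"
  shows "cptp n (chan n K0 c0 w0 K1 c1 w1)"
  unfolding cptp_def linear_superop_def completely_positive_def trace_preserving_def
proof (intro conjI ballI allI impI)
  fix A :: "complex mat" assume "A \<in> carrier_mat n n"
  then show "mtrace (chan n K0 c0 w0 K1 c1 w1 A) = mtrace A" by (rule tp)
next
  fix A :: "complex mat" show "chan n K0 c0 w0 K1 c1 w1 A \<in> carrier_mat n n" unfolding chan_def by simp
next
  fix A B :: "complex mat" assume A: "A \<in> carrier_mat n n" and B: "B \<in> carrier_mat n n"
  show "chan n K0 c0 w0 K1 c1 w1 (A + B) = chan n K0 c0 w0 K1 c1 w1 A + chan n K0 c0 w0 K1 c1 w1 B"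
    by (rule eq_matI) (auto simp: chan_def trpf_addM[OF A B] ring_distribs)
next
  fix A :: "complex mat" and a :: complex assume A: "A \<in> carrier_mat n n"
  show "chan n K0 c0 w0 K1 c1 w1 (a \<cdot>\<^sub>m A) = a \<cdot>\<^sub>m chan n K0 c0 w0 K1 c1 w1 A"
    by (rule eq_matI) (auto simp: chan_def trpf_smultM[OF A] ring_distribs mult_ac)
next
  fix kk :: nat and M assume "1 \<le> kk" and pM: "psd (kk * n) M"
  define Amp where "Amp = ampliate kk n (chan n K0 c0 w0 K1 c1 w1) M"
  have Mc: "M \<in> carrier_mat (kk*n) (kk*n)" and hMa: "adj M = M" using pM unfolding psd_def by auto
  have hM: "\<And>p q. p < kk*n \<Longrightarrow> q < kk*n \<Longrightarrow> M $$ (p,q) = cnj (M $$ (q,p))"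
    using adj_herm[OF Mc hMa] by blast
  have hK0: "\<And>r s. K0 s r = cnj (K0 r s)" using K0 unfolding goodK_def by blast
  have hK1: "\<And>r s. K1 s r = cnj (K1 r s)" using K1 unfolding goodK_def by blast
  have car: "Amp \<in> carrier_mat (kk*n) (kk*n)" unfolding Amp_def ampliate_def by simp
  have herm: "adj Amp = Amp"
  proof (rule eq_matI)
    fix a b assume "a < dim_row Amp" "b < dim_col Amp"
    then have a: "a < kk*n" and b: "b < kk*n" using car by auto
    have da: "a div n < kk" and db: "b div n < kk" using a b
      by (auto simp: less_mult_imp_div_less)
    have "adj Amp $$ (a,b) = cnj (Amp $$ (b,a))" unfolding adj_def using a b car by auto
    also have "\<dots> = Amp $$ (a,b)"
      unfolding Amp_def amp_entry[OF a b] amp_entry[OF b a]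
      using trpf_cnj[where k=kk and n=n and A=M and x="a div n" and y="b div n" and K=K0, OF hM da db hK0]
        trpf_cnj[where k=kk and n=n and A=M and x="a div n" and y="b div n" and K=K1, OF hM da db hK1]
      by (simp add: mult_ac)
    finally show "adj Amp $$ (a,b) = Amp $$ (a,b)" .
  qed (use car in \<open>auto simp: adj_def\<close>)
  have quad: "Im q = 0 \<and> 0 \<le> Re q" if v: "v \<in> carrier_vec (kk*n)" and q: "q = (\<Sum>a<kk*n. cnj (v$a) * (Amp *\<^sub>v v)$a)" for v q
  proof
    show "Im q = 0" unfolding q by (rule herm_quad_real[OF car herm v])
    have "q = (\<Sum>a<kk*n. \<Sum>b<kk*n. cnj (v$a) * Amp$$(a,b) * v$b)"
      unfolding q by (rule quad_expand[OF car v])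
    also have "\<dots> = (\<Sum>a<kk*n. \<Sum>b<kk*n. cnj (v$a) * (trpf n (Ablk M n (a div n) (b div n)) K0
            * complex_of_real c0 * w0 (a mod n) * cnj (w0 (b mod n))) * v$b)
       + (\<Sum>a<kk*n. \<Sum>b<kk*n. cnj (v$a) * (trpf n (Ablk M n (a div n) (b div n)) K1
            * complex_of_real c1 * w1 (a mod n) * cnj (w1 (b mod n))) * v$b)"
      unfolding sum.distrib[symmetric] Amp_def
      by (intro sum.cong refl) (simp add: amp_entry ring_distribs)
    finally have qe: "Re q = Re (\<Sum>a<kk*n. \<Sum>b<kk*n. cnj (v$a) * (trpf n (Ablk M n (a div n) (b div n)) K0
            * complex_of_real c0 * w0 (a mod n) * cnj (w0 (b mod n))) * v$b)
       + Re (\<Sum>a<kk*n. \<Sum>b<kk*n. cnj (v$a) * (trpf n (Ablk M n (a div n) (b div n)) K1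
            * complex_of_real c1 * w1 (a mod n) * cnj (w1 (b mod n))) * v$b)" by simp
    show "0 \<le> Re q" unfolding qe
      using cp_term[OF Mc pM K0 c0, of "\<lambda>a. v$a" w0] cp_term[OF Mc pM K1 c1, of "\<lambda>a. v$a" w1]
      by linarith
  qed
  show "psd (kk * n) (ampliate kk n (chan n K0 c0 w0 K1 c1 w1) M)"
    unfolding psd_def Let_def Amp_def[symmetric] using car herm quad by blast
qed


definition eps :: "nat \<Rightarrow> real" where "eps n = 1 / (8 * real n)"
definition IdK :: "nat \<Rightarrow> nat \<Rightarrow> complex" where "IdK = (\<lambda>r s. if r = s then 1 else 0)"
definition ev :: "nat \<Rightarrow> nat \<Rightarrow> complex" where "ev i = (\<lambda>r. if r = i then 1 else 0)"
definition wv :: "nat \<Rightarrow> nat \<Rightarrow> nat \<Rightarrow> complex" where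
  "wv n p r = (if p div n = p mod n then (if r = p div n then 1 else 0)
     else if p div n < p mod n then (if r = p div n \<or> r = p mod n then 1 else 0)
     else (if r = p mod n then 1 else if r = p div n then \<i> else 0))"
definition cpn :: "nat \<Rightarrow> nat \<Rightarrow> real" where "cpn n p = (if p div n = p mod n then 1 else 1/2)"
definition Tm :: "nat \<Rightarrow> (nat \<Rightarrow> real) \<Rightarrow> nat \<Rightarrow> nat \<Rightarrow> complex" where
  "Tm n sg r t = (if r = t then complex_of_real (sg (r*n+r))
    else if r < t then complex_of_real (sg (r*n+t) - (sg (r*n+r) + sg (t*n+t))/2)
       - \<i> * complex_of_real (sg (t*n+r) - (sg (r*n+r) + sg (t*n+t))/2)
    else complex_of_real (sg (t*n+r) - (sg (r*n+r) + sg (t*n+t))/2)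
       + \<i> * complex_of_real (sg (r*n+t) - (sg (r*n+r) + sg (t*n+t))/2))"
definition Mm :: "nat \<Rightarrow> (nat \<Rightarrow> real) \<Rightarrow> nat \<Rightarrow> nat \<Rightarrow> complex" where
  "Mm n sg = (\<lambda>r s. (if r = s then 1/2 else 0) + complex_of_real (eps n) * Tm n sg r s)"
definition Mc :: "nat \<Rightarrow> (nat \<Rightarrow> real) \<Rightarrow> nat \<Rightarrow> nat \<Rightarrow> complex" where
  "Mc n sg = (\<lambda>r s. (if r = s then 1/2 else 0) + complex_of_real (eps n) * (- Tm n sg r s))"
definition sgI :: "nat set \<Rightarrow> nat \<Rightarrow> real" where "sgI I p = (if p \<in> I then 1 else -1)"

definition Es :: "nat \<Rightarrow> nat \<Rightarrow> complex mat \<Rightarrow> complex mat" where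
  "Es n \<sigma> = (if \<sigma> < n*n then chan n IdK (cpn n \<sigma>) (wv n \<sigma>) (\<lambda>r s. 0) 0 (\<lambda>r. 0)
     else chan n (Mm n (sgI (set_decode (\<sigma> - n*n)))) 1 (ev 0) (Mc n (sgI (set_decode (\<sigma> - n*n)))) 1 (ev 1))"

definition e0m :: "nat \<Rightarrow> complex mat" where
  "e0m n = mat n n (\<lambda>(i,j). if i = 0 \<and> j = 0 then 1 else 0)"

lemma Tm_herm: "Tm n sg s r = cnj (Tm n sg r s)"
  unfolding Tm_def by (auto simp: complex_eq_iff)

lemma cmod_ri: "cmod (complex_of_real a + \<i> * complex_of_real b) \<le> \<bar>a\<bar> + \<bar>b\<bar>"
  using norm_triangle_ineq[of "complex_of_real a" "\<i> * complex_of_real b"] by (simp add: norm_mult)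

lemma cmod_ri2: "cmod (complex_of_real a - \<i> * complex_of_real b) \<le> \<bar>a\<bar> + \<bar>b\<bar>"
  using norm_triangle_ineq4[of "complex_of_real a" "\<i> * complex_of_real b"] by (simp add: norm_mult)

lemma Tm_bound:
  assumes "\<And>p. \<bar>sg p\<bar> \<le> 1"
  shows "cmod (Tm n sg r t) \<le> 4"
proof -
  have b: "\<bar>sg a - (sg b + sg c)/2\<bar> \<le> 2" for a b c
    using assms[of a] assms[of b] assms[of c] by (auto simp: abs_le_iff field_simps)
  show ?thesis
  proof (cases "r = t")
    case True
    have "cmod (Tm n sg r t) = \<bar>sg (r*n+r)\<bar>" using True by (simp add: Tm_def)
    then show ?thesis using assms[of "r*n+r"] by simp
  next
    case False
    show ?thesis
    proof (cases "r < t")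
      case True
      have "Tm n sg r t = complex_of_real (sg (r*n+t) - (sg (r*n+r) + sg (t*n+t))/2)
       - \<i> * complex_of_real (sg (t*n+r) - (sg (r*n+r) + sg (t*n+t))/2)"
        using False True by (simp add: Tm_def)
      also have "cmod \<dots> \<le> \<bar>sg (r*n+t) - (sg (r*n+r) + sg (t*n+t))/2\<bar> + \<bar>sg (t*n+r) - (sg (r*n+r) + sg (t*n+t))/2\<bar>"
        by (rule cmod_ri2)
      also have "\<dots> \<le> 2 + 2" by (intro add_mono b)
      finally show ?thesis by simp
    next
      case False2: False
      have "Tm n sg r t = complex_of_real (sg (t*n+r) - (sg (r*n+r) + sg (t*n+t))/2)
       + \<i> * complex_of_real (sg (r*n+t) - (sg (r*n+r) + sg (t*n+t))/2)"
        using False False2 by (simp add: Tm_def)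
      also have "cmod \<dots> \<le> \<bar>sg (t*n+r) - (sg (r*n+r) + sg (t*n+t))/2\<bar> + \<bar>sg (r*n+t) - (sg (r*n+r) + sg (t*n+t))/2\<bar>"
        by (rule cmod_ri)
      also have "\<dots> \<le> 2 + 2" by (intro add_mono b)
      finally show ?thesis by simp
    qed
  qed
qed

lemma eps_ok: "0 \<le> eps n" "8 * eps n * real n \<le> 1"
  unfolding eps_def by (cases "n = 0"; simp)+

lemma sgI_bound: "\<bar>sgI I p\<bar> \<le> 1" unfolding sgI_def by auto

lemma goodK_Mm: "goodK n (Mm n (sgI I))"
  unfolding Mm_def
  by (rule goodK_M[OF Tm_herm Tm_bound[OF sgI_bound] eps_ok])

lemma goodK_Mc: "goodK n (Mc n (sgI I))"
proof -
  have "goodK n (\<lambda>r s. (if r = s then 1/2 else 0) + complex_of_real (eps n) * (\<lambda>r s. - Tm n (sgI I) r s) r s)"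
    apply (rule goodK_M)
    subgoal for r s using Tm_herm[where n=n and sg="sgI I" and r=r and s=s] by simp
    subgoal for r s using Tm_bound[where sg="sgI I" and n=n and r=r and t=s, OF sgI_bound] by simp
    by (rule eps_ok)+
  then show ?thesis unfolding Mc_def by simp
qed

lemma mtrace_chan: "mtrace (chan n K0 c0 w0 K1 c1 w1 A) =
   trpf n (\<lambda>i j. A $$ (i,j)) K0 * complex_of_real c0 * (\<Sum>r<n. w0 r * cnj (w0 r))
 + trpf n (\<lambda>i j. A $$ (i,j)) K1 * complex_of_real c1 * (\<Sum>r<n. w1 r * cnj (w1 r))"
  unfolding mtrace_def chan_def by (simp add: sum.distrib sum_distrib_left sum_distrib_right mult_ac)

lemma mtrace_trpf: "A \<in> carrier_mat n n \<Longrightarrow> mtrace A = trpf n (\<lambda>i j. A $$ (i,j)) IdK"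
  unfolding mtrace_def IdK_def trpf_Id by simp

lemma norm_ev: "i < n \<Longrightarrow> (\<Sum>r<n. ev i r * cnj (ev i r)) = 1"
  unfolding ev_def by (subst sum_one[of i]) auto

lemma norm_wv:
  assumes p: "p < n*n"
  shows "complex_of_real (cpn n p) * (\<Sum>r<n. wv n p r * cnj (wv n p r)) = 1"
proof -
  have n: "0 < n" using p by (cases n) auto
  define j where "j = p div n"
  define l where "l = p mod n"
  have j: "j < n" unfolding j_def using p by (simp add: less_mult_imp_div_less)
  have l: "l < n" unfolding l_def using n by simp
  consider "j = l" | "j < l" | "l < j" by linarith
  then show ?thesis
  proof cases
    case 1
    then show ?thesis unfolding cpn_def wv_def j_def[symmetric] l_def[symmetric]
      by (subst sum_one[OF j]) auto
  next
    case 2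
    then show ?thesis unfolding cpn_def wv_def j_def[symmetric] l_def[symmetric]
      by (subst sum_two[of j l]) (auto simp: j l)
  next
    case 3
    then show ?thesis unfolding cpn_def wv_def j_def[symmetric] l_def[symmetric]
      by (subst sum_two[of l j]) (auto simp: j l)
  qed
qed

lemma cptp_Es:
  assumes n: "2 \<le> n"
  shows "cptp n (Es n \<sigma>)"
proof (cases "\<sigma> < n*n")
  case True
  have g: "goodK n IdK" unfolding IdK_def by (rule goodK_Id)
  have e: "Es n \<sigma> = chan n IdK (cpn n \<sigma>) (wv n \<sigma>) (\<lambda>r s. 0) 0 (\<lambda>r. 0)"
    unfolding Es_def using True by simp
  have tp: "mtrace (chan n IdK (cpn n \<sigma>) (wv n \<sigma>) (\<lambda>r s. 0) 0 (\<lambda>r. 0) A) = mtrace A"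
    if A: "A \<in> carrier_mat n n" for A
  proof -
    have "mtrace (chan n IdK (cpn n \<sigma>) (wv n \<sigma>) (\<lambda>r s. 0) 0 (\<lambda>r. 0) A)
      = trpf n (\<lambda>i j. A $$ (i,j)) IdK * (complex_of_real (cpn n \<sigma>) * (\<Sum>r<n. wv n \<sigma> r * cnj (wv n \<sigma> r)))"
      unfolding mtrace_chan by (simp add: mult.assoc)
    also have "\<dots> = mtrace A" unfolding norm_wv[OF True] mtrace_trpf[OF A] by simp
    finally show ?thesis .
  qed
  have c: "0 \<le> cpn n \<sigma>" unfolding cpn_def by simp
  show ?thesis unfolding e by (rule cptp_chan[OF g goodK_0 c _ tp]) simp
next
  case False
  define sg where "sg = sgI (set_decode (\<sigma> - n*n))"
  have tp: "mtrace (chan n (Mm n sg) 1 (ev 0) (Mc n sg) 1 (ev 1) A) = mtrace A" if A: "A \<in> carrier_mat n n" for A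
  proof -
    have "trpf n (\<lambda>i j. A $$ (i,j)) (Mm n sg) + trpf n (\<lambda>i j. A $$ (i,j)) (Mc n sg)
       = trpf n (\<lambda>i j. A $$ (i,j)) (\<lambda>r s. 1 * Mm n sg r s + 1 * Mc n sg r s)"
      by (simp only: trpf_lin) simp
    also have "(\<lambda>r s. 1 * Mm n sg r s + 1 * Mc n sg r s) = IdK"
      unfolding Mm_def Mc_def IdK_def by (intro ext) (simp add: algebra_simps)
    finally show ?thesis
      unfolding mtrace_chan mtrace_trpf[OF A] using n by (simp add: norm_ev)
  qed
  have e: "Es n \<sigma> = chan n (Mm n sg) 1 (ev 0) (Mc n sg) 1 (ev 1)"
    unfolding Es_def sg_def using False by simp
  show ?thesis unfolding e
    by (rule cptp_chan[OF _ _ _ _ tp]) (auto simp: sg_def goodK_Mm goodK_Mc)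
qed


lemma qf_lin: "qf n (\<lambda>r s. a * K1 r s + b * K2 r s) w = a * qf n K1 w + b * qf n K2 w"
  unfolding qf_def by (simp add: sum.distrib sum_distrib_left algebra_simps)

lemma qf_Id: "qf n IdK w = (\<Sum>r<n. cnj (w r) * w r)"
  unfolding qf_def IdK_def
proof (intro sum.cong refl)
  fix r assume "r \<in> {..<n}"
  then show "(\<Sum>s<n. cnj (w r) * (if r = s then 1 else 0) * w s) = cnj (w r) * w r"
    by (subst sum_one[of r]) auto
qed

lemma trpf_rank1: "trpf n (\<lambda>i j. a * w i * cnj (w j)) K = a * qf n K w"
proof -
  have "trpf n (\<lambda>i j. a * w i * cnj (w j)) K = (\<Sum>i<n. \<Sum>j<n. a * w i * cnj (w j) * K j i)"
    unfolding trpf_def ..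
  also have "\<dots> = (\<Sum>j<n. \<Sum>i<n. a * w i * cnj (w j) * K j i)" by (rule sum.swap)
  also have "\<dots> = a * qf n K w" unfolding qf_def by (simp add: sum_distrib_left mult_ac)
  finally show ?thesis .
qed

lemma e0m_carrier: "e0m n \<in> carrier_mat n n" unfolding e0m_def by simp

lemma mtrace_e0:
  assumes Z: "Z \<in> carrier_mat n n" and n: "0 < n"
  shows "mtrace (e0m n * Z) = Z $$ (0,0)"
proof -
  have "mtrace (e0m n * Z) = (\<Sum>i<n. (e0m n * Z) $$ (i,i))"
    unfolding mtrace_def by (simp add: e0m_def)
  also have "\<dots> = (\<Sum>i<n. \<Sum>k<n. (if i = 0 \<and> k = 0 then 1 else 0) * Z $$ (k,i))"
    using Z by (intro sum.cong refl) (auto simp: e0m_def scalar_prod_def atLeast0LessThan)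
  also have "\<dots> = Z $$ (0,0)"
    by (subst sum_one[OF n]) (auto intro!: sum.neutral, subst sum_one[OF n], auto)
  finally show ?thesis .
qed

lemma density_e0: assumes n: "0 < n" shows "density_op n (e0m n)"
  unfolding density_op_def psd_def
proof (intro conjI ballI)
  show "e0m n \<in> carrier_mat n n" by (rule e0m_carrier)
  show "adj (e0m n) = e0m n" by (rule eq_matI) (auto simp: adj_def e0m_def)
  show "mtrace (e0m n) = 1" unfolding mtrace_def e0m_def using n
    by simp
  fix v :: "complex vec" assume v: "v \<in> carrier_vec n"
  have "(\<Sum>a<n. cnj (v$a) * (e0m n *\<^sub>v v)$a) = (\<Sum>a<n. \<Sum>b<n. cnj (v$a) * e0m n $$(a,b) * v$b)"
    by (rule quad_expand[OF e0m_carrier v])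
  also have "\<dots> = (\<Sum>a<n. \<Sum>b<n. cnj (v$a) * (if a = 0 \<and> b = 0 then 1 else 0) * v$b)"
    by (intro sum.cong refl) (auto simp: e0m_def)
  also have "\<dots> = cnj (v$0) * v$0"
    by (subst sum_one[OF n]) (auto intro!: sum.neutral, subst sum_one[OF n], auto)
  finally have q: "(\<Sum>a<n. cnj (v$a) * (e0m n *\<^sub>v v)$a) = cnj (v$0) * v$0" .
  show "let q = \<Sum>i<n. cnj (v $ i) * (e0m n *\<^sub>v v) $ i in Im q = 0 \<and> 0 \<le> Re q"
    unfolding Let_def q by (simp add: algebra_simps)
qed

lemma orth_e0: "orth_projector n (e0m n)"
  unfolding orth_projector_def
proof (intro conjI)
  show "e0m n \<in> carrier_mat n n" by (rule e0m_carrier)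
  show "adj (e0m n) = e0m n" by (rule eq_matI) (auto simp: adj_def e0m_def)
  show "e0m n * e0m n = e0m n"
  proof (rule eq_matI)
    fix i j assume i: "i < dim_row (e0m n)" and j: "j < dim_col (e0m n)"
    then have i: "i < n" and j: "j < n" by (auto simp: e0m_def)
    have "(e0m n * e0m n) $$ (i,j) = (\<Sum>k<n. (if i = 0 \<and> k = 0 then 1 else 0) * (if k = 0 \<and> j = 0 then 1 else 0))"
      using i j by (auto simp: e0m_def scalar_prod_def atLeast0LessThan intro!: sum.cong)
    also have "\<dots> = (if i = 0 \<and> j = 0 then 1 else 0)"
      using i by (subst sum_one[of 0]) auto
    finally show "(e0m n * e0m n) $$ (i,j) = e0m n $$ (i,j)" using i j by (simp add: e0m_def)
  qed (auto simp: e0m_def)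
qed

lemma qT:
  assumes p: "p < n*n"
  shows "complex_of_real (cpn n p) * qf n (Tm n sg) (wv n p) = complex_of_real (sg p)"
proof -
  have n: "0 < n" using p by (cases n) auto
  define j where "j = p div n"
  define l where "l = p mod n"
  have j: "j < n" unfolding j_def using p by (simp add: less_mult_imp_div_less)
  have l: "l < n" unfolding l_def using n by simp
  have pjl: "p = j*n+l" unfolding j_def l_def by simp
  consider "j = l" | "j < l" | "l < j" by linarith
  then show ?thesis
  proof cases
    case 1
    have "qf n (Tm n sg) (wv n p) = cnj (wv n p j) * Tm n sg j j * wv n p j"
      by (rule qf_one[OF j]) (simp add: wv_def j_def[symmetric] l_def[symmetric] 1)
    moreover have "wv n p j = 1" using 1 by (simp add: wv_def j_def[symmetric] l_def[symmetric])
    moreover have "cpn n p = 1" using 1 by (simp add: cpn_def j_def[symmetric] l_def[symmetric])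
    moreover have "Tm n sg j j = complex_of_real (sg p)" using pjl 1 by (simp add: Tm_def)
    ultimately show ?thesis by simp
  next
    case 2
    have w1: "wv n p j = 1" "wv n p l = 1" using 2 by (auto simp: wv_def j_def[symmetric] l_def[symmetric])
    have "qf n (Tm n sg) (wv n p) = cnj (wv n p j) * Tm n sg j j * wv n p j + cnj (wv n p j) * Tm n sg j l * wv n p l
     + cnj (wv n p l) * Tm n sg l j * wv n p j + cnj (wv n p l) * Tm n sg l l * wv n p l"
      by (rule qf_two) (use 2 j l in \<open>auto simp: wv_def j_def[symmetric] l_def[symmetric]\<close>)
    moreover have c: "cpn n p = 1/2" using 2 by (simp add: cpn_def j_def[symmetric] l_def[symmetric])
    ultimately show ?thesis using 2 unfolding w1 c
      by (simp add: Tm_def pjl complex_eq_iff field_simps)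
  next
    case 3
    have w1: "wv n p l = 1" "wv n p j = \<i>" using 3 by (auto simp: wv_def j_def[symmetric] l_def[symmetric])
    have "qf n (Tm n sg) (wv n p) = cnj (wv n p l) * Tm n sg l l * wv n p l + cnj (wv n p l) * Tm n sg l j * wv n p j
     + cnj (wv n p j) * Tm n sg j l * wv n p l + cnj (wv n p j) * Tm n sg j j * wv n p j"
      by (rule qf_two) (use 3 j l in \<open>auto simp: wv_def j_def[symmetric] l_def[symmetric]\<close>)
    moreover have c: "cpn n p = 1/2" using 3 by (simp add: cpn_def j_def[symmetric] l_def[symmetric])
    ultimately show ?thesis using 3 unfolding w1 c
      by (simp add: Tm_def pjl complex_eq_iff field_simps)
  qed
qed

lemma qprob:
  assumes p: "p < n*n" and n: "2 \<le> n"
  shows "qfa_prob (e0m n) (Es n) (e0m n) [p, n*n + c] = 1/2 + eps n * sgI (set_decode c) p"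
proof -
  define sg where "sg = sgI (set_decode c)"
  define Y where "Y = Es n p (e0m n)"
  have n0: "0 < n" using n by simp
  have Ye: "Y = chan n IdK (cpn n p) (wv n p) (\<lambda>r s. 0) 0 (\<lambda>r. 0) (e0m n)"
    unfolding Y_def Es_def using p by simp
  have Yc: "Y \<in> carrier_mat n n" unfolding Ye chan_def by simp
  have t1: "trpf n (\<lambda>i j. e0m n $$ (i,j)) IdK = 1"
    using mtrace_trpf[OF e0m_carrier, of n] density_e0[OF n0] unfolding density_op_def by simp
  have Yij: "Y $$ (i,j) = complex_of_real (cpn n p) * wv n p i * cnj (wv n p j)" if "i < n" "j < n" for i j
    unfolding Ye chan_def using that t1 by simp
  define Z where "Z = Es n (n*n+c) Y"
  have Ze: "Z = chan n (Mm n sg) 1 (ev 0) (Mc n sg) 1 (ev 1) Y"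
    unfolding Z_def Es_def sg_def by simp
  have Zc: "Z \<in> carrier_mat n n" unfolding Ze chan_def by simp
  have "Z $$ (0,0) = trpf n (\<lambda>i j. Y $$ (i,j)) (Mm n sg)"
    unfolding Ze chan_def using n0 n by (simp add: ev_def)
  also have "\<dots> = trpf n (\<lambda>i j. complex_of_real (cpn n p) * wv n p i * cnj (wv n p j)) (Mm n sg)"
    by (rule trpf_cong) (simp add: Yij)
  also have "\<dots> = complex_of_real (cpn n p) * qf n (Mm n sg) (wv n p)" by (rule trpf_rank1)
  also have "Mm n sg = (\<lambda>r s. (1/2) * IdK r s + complex_of_real (eps n) * Tm n sg r s)"
    unfolding Mm_def IdK_def by (intro ext) simp
  also have "complex_of_real (cpn n p) * qf n (\<lambda>r s. (1/2) * IdK r s + complex_of_real (eps n) * Tm n sg r s) (wv n p)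
     = (1/2) * (complex_of_real (cpn n p) * (\<Sum>r<n. wv n p r * cnj (wv n p r)))
       + complex_of_real (eps n) * (complex_of_real (cpn n p) * qf n (Tm n sg) (wv n p))"
    unfolding qf_lin qf_Id by (simp add: algebra_simps)
  also have "\<dots> = 1/2 + complex_of_real (eps n) * complex_of_real (sg p)"
    unfolding norm_wv[OF p] qT[OF p] by simp
  finally have "Z $$ (0,0) = 1/2 + complex_of_real (eps n) * complex_of_real (sg p)" .
  then have "Re (mtrace (e0m n * Z)) = 1/2 + eps n * sg p"
    unfolding mtrace_e0[OF Zc n0] by simp
  then show ?thesis unfolding qfa_prob_def Z_def Y_def sg_def by simp
qed


lemma pfa_linear:
  assumes P: "is_pfa \<Sigma> k \<pi> Ps Pend F" and p: "p \<in> \<Sigma>" and b: "b \<in> \<Sigma>"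
  shows "pfa_prob \<pi> Ps Pend F [p,b] =
    (\<Sum>j<k. row_times \<pi> (Ps p) $ j * (\<Sum>i\<in>F. \<Sum>l<k. Ps b $$ (j,l) * Pend $$ (l,i)))"
proof -
  have pv: "\<pi> \<in> carrier_vec k" and Pp: "Ps p \<in> carrier_mat k k" and Pb: "Ps b \<in> carrier_mat k k"
    and Pe: "Pend \<in> carrier_mat k k" and F: "F \<subseteq> {..<k}"
    using P p b unfolding is_pfa_def prob_vec_def row_stochastic_def by auto
  define x where "x = row_times \<pi> (Ps p)"
  have dx: "dim_vec x = k" unfolding x_def row_times_def using Pp by simp
  define y where "y = row_times x (Ps b)"
  have dy: "dim_vec y = k" unfolding y_def row_times_def using Pb by simp
  have yl: "y $ l = (\<Sum>j<k. x $ j * Ps b $$ (j,l))" if "l < k" for l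
    unfolding y_def row_times_def using that Pb dx by simp
  have "pfa_prob \<pi> Ps Pend F [p,b] = (\<Sum>i\<in>F. row_times y Pend $ i)"
    unfolding pfa_prob_def Let_def x_def y_def by simp
  also have "\<dots> = (\<Sum>i\<in>F. \<Sum>l<k. (\<Sum>j<k. x $ j * Ps b $$ (j,l)) * Pend $$ (l,i))"
  proof (rule sum.cong[OF refl])
    fix i assume "i \<in> F"
    then have i: "i < k" using F by auto
    show "row_times y Pend $ i = (\<Sum>l<k. (\<Sum>j<k. x $ j * Ps b $$ (j,l)) * Pend $$ (l,i))"
      unfolding row_times_def using i Pe dy yl by simp
  qed
  also have "\<dots> = (\<Sum>i\<in>F. \<Sum>l<k. \<Sum>j<k. x $ j * (Ps b $$ (j,l) * Pend $$ (l,i)))"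
    by (simp add: sum_distrib_right mult.assoc)
  also have "\<dots> = (\<Sum>j<k. \<Sum>i\<in>F. \<Sum>l<k. x $ j * (Ps b $$ (j,l) * Pend $$ (l,i)))"
    by (rule sum_swap3[symmetric])
  also have "\<dots> = (\<Sum>j<k. x $ j * (\<Sum>i\<in>F. \<Sum>l<k. Ps b $$ (j,l) * Pend $$ (l,i)))"
    by (simp add: sum_distrib_left)
  finally show ?thesis unfolding x_def .
qed

lemma sum_row_times:
  assumes pv: "prob_vec k \<pi>" and P: "row_stochastic k M"
  shows "(\<Sum>j<k. row_times \<pi> M $ j) = 1"
proof -
  have pc: "\<pi> \<in> carrier_vec k" and Mc: "M \<in> carrier_mat k k"
    using pv P unfolding prob_vec_def row_stochastic_def by auto
  have "(\<Sum>j<k. row_times \<pi> M $ j) = (\<Sum>j<k. \<Sum>i<k. \<pi> $ i * M $$ (i,j))"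
    using pc Mc by (intro sum.cong refl) (simp add: row_times_def)
  also have "\<dots> = (\<Sum>i<k. \<Sum>j<k. \<pi> $ i * M $$ (i,j))" by (rule sum.swap)
  also have "\<dots> = (\<Sum>i<k. \<pi> $ i * (\<Sum>j<k. M $$ (i,j)))" by (simp add: sum_distrib_left)
  also have "\<dots> = (\<Sum>i<k. \<pi> $ i)" using P unfolding row_stochastic_def by simp
  also have "\<dots> = 1" using pv unfolding prob_vec_def by simp
  finally show ?thesis .
qed

theorem theorem4p1:
  fixes n :: nat
  assumes "n \<ge> 2"
  shows "\<exists>(\<Sigma>::nat set) \<rho>0 Es Pacc.
           finite \<Sigma> \<and> is_1gqfa \<Sigma> n \<rho>0 Es Pacc \<and>
           (\<forall>k \<pi> Ps Pend F.
              is_pfa \<Sigma> k \<pi> Ps Pend F \<longrightarrow>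
              (\<exists>\<mu>::real. 0 \<le> \<mu> \<and> \<mu> < 1 \<and>
                 pfa_lang \<Sigma> \<pi> Ps Pend F \<mu> = qfa_lang \<Sigma> \<rho>0 Es Pacc (1/2)) \<longrightarrow>
              k \<ge> n\<^sup>2 - 1)"
proof -
  have n0: "0 < n" using assms by simp
  define m where "m = n*n"
  define \<Sigma> where "\<Sigma> = {..<m} \<union> (\<lambda>I. m + set_encode I) ` Pow {..<m}"
  have fin: "finite \<Sigma>" unfolding \<Sigma>_def by simp
  have Q: "is_1gqfa \<Sigma> n (e0m n) (Es n) (e0m n)"
    unfolding is_1gqfa_def using density_e0[OF n0] cptp_Es[OF assms] orth_e0 by blast
  have main: "n\<^sup>2 - 1 \<le> k" if P: "is_pfa \<Sigma> k \<pi> Ps Pend F"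
    and L: "pfa_lang \<Sigma> \<pi> Ps Pend F \<mu> = qfa_lang \<Sigma> (e0m n) (Es n) (e0m n) (1/2)"
    for k \<pi> Ps Pend F \<mu>
  proof (rule ccontr)
    assume "\<not> n\<^sup>2 - 1 \<le> k"
    then have km: "k < m" unfolding m_def by (simp add: power2_eq_square)
    define x where "x p = row_times \<pi> (Ps p)" for p
    have pin: "p \<in> \<Sigma>" if "p < m" for p unfolding \<Sigma>_def using that by simp
    have pv: "prob_vec k \<pi>" using P unfolding is_pfa_def by simp
    have rs: "row_stochastic k (Ps p)" if "p < m" for p
      using P pin[OF that] unfolding is_pfa_def by simp
    have sx: "(\<Sum>j<k. x p $ j) = 1" if "p < m" for p
      unfolding x_def by (rule sum_row_times[OF pv rs[OF that]])
    define c where "c i = vec m (\<lambda>p. if i < k then x p $ i else (0::real))" for i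
    define A where "A = mat\<^sub>r m m (\<lambda>i. if i = k then 0\<^sub>v m else c i)"
    have Ac: "A \<in> carrier_mat m m" unfolding A_def by simp
    have "det A = 0" unfolding A_def by (rule det_row_0[OF km]) (auto simp: c_def)
    then obtain v where v: "v \<in> carrier_vec m" "v \<noteq> 0\<^sub>v m" "A *\<^sub>v v = 0\<^sub>v m"
      using det_0_iff_vec_prod_zero[OF Ac] by blast
    have lin: "(\<Sum>p<m. x p $ j * v $ p) = 0" if j: "j < k" for j
    proof -
      have jm: "j < m" using j km by simp
      have "(A *\<^sub>v v) $ j = 0" using v(3) jm by simp
      moreover have "row A j = c j" unfolding A_def using jm j by (subst row_mat_of_row_fun) (auto simp: c_def)
      ultimately have "c j \<bullet> v = 0" using jm Ac by simp
      then show ?thesis using v(1) j unfolding c_def scalar_prod_def by (simp add: atLeast0LessThan)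
    qed
    have sv: "(\<Sum>p<m. v $ p) = 0"
    proof -
      have "(\<Sum>p<m. v $ p) = (\<Sum>p<m. \<Sum>j<k. x p $ j * v $ p)"
        using sx by (intro sum.cong refl) (simp add: sum_distrib_right[symmetric])
      also have "\<dots> = (\<Sum>j<k. \<Sum>p<m. x p $ j * v $ p)" by (rule sum.swap)
      also have "\<dots> = 0" using lin by simp
      finally show ?thesis .
    qed
    obtain p0 where p0: "p0 < m" "0 < v $ p0"
    proof (rule ccontr)
      assume "\<not> thesis"
      then have nonpos: "\<forall>p<m. v $ p \<le> 0" using that by force
      have "(\<Sum>p<m. - v $ p) = 0" using sv by (simp add: sum_negf)
      then have "\<forall>p\<in>{..<m}. - v $ p = 0" using nonpos by (subst (asm) sum_nonneg_eq_0_iff) auto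
      then have "v = 0\<^sub>v m" using v(1) by (intro eq_vecI) auto
      then show False using v(2) by simp
    qed
    define I where "I = {p. p < m \<and> 0 < v $ p}"
    have If: "finite I" and Im: "I \<subseteq> {..<m}" unfolding I_def by auto
    define b where "b = m + set_encode I"
    have bS: "b \<in> \<Sigma>" unfolding \<Sigma>_def b_def using Im by auto
    have dec: "set_decode (set_encode I) = I" using If by simp
    define z where "z j = (\<Sum>i\<in>F. \<Sum>l<k. Ps b $$ (j,l) * Pend $$ (l,i))" for j
    define f where "f p = pfa_prob \<pi> Ps Pend F [p,b]" for p
    have fe: "f p = (\<Sum>j<k. x p $ j * z j)" if "p < m" for p
      unfolding f_def x_def z_def by (rule pfa_linear[OF P pin[OF that] bS])
    have eps_pos: "0 < eps n" unfolding eps_def using n0 by simp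
    have key: "\<mu> < f p \<longleftrightarrow> 0 < v $ p" if p: "p < m" for p
    proof -
      have w: "[p,b] \<in> lists \<Sigma>" using pin[OF p] bS by simp
      have "\<mu> < f p \<longleftrightarrow> [p,b] \<in> pfa_lang \<Sigma> \<pi> Ps Pend F \<mu>"
        unfolding pfa_lang_def f_def using w by simp
      also have "\<dots> \<longleftrightarrow> [p,b] \<in> qfa_lang \<Sigma> (e0m n) (Es n) (e0m n) (1/2)" unfolding L ..
      also have "\<dots> \<longleftrightarrow> 1/2 < 1/2 + eps n * sgI I p"
        unfolding qfa_lang_def using w qprob[of p n "set_encode I"] p assms
        unfolding b_def m_def dec by simp
      also have "\<dots> \<longleftrightarrow> p \<in> I" using eps_pos unfolding sgI_def by auto
      also have "\<dots> \<longleftrightarrow> 0 < v $ p" unfolding I_def using p by simp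
      finally show ?thesis .
    qed
    have terms: "0 \<le> v $ p * (f p - \<mu>)" if p: "p \<in> {..<m}" for p
    proof (cases "0 < v $ p")
      case True
      then have "\<mu> < f p" using key[of p] p by simp
      then show ?thesis using True by simp
    next
      case False
      then have "\<not> \<mu> < f p" using key[of p] p by simp
      then have "f p \<le> \<mu>" by simp
      then show ?thesis using False by (intro mult_nonpos_nonpos) auto
    qed
    have "(\<Sum>p<m. v $ p * (f p - \<mu>)) = (\<Sum>p<m. v $ p * f p) - \<mu> * (\<Sum>p<m. v $ p)"
      by (simp add: algebra_simps sum_subtractf sum_distrib_left)
    also have "(\<Sum>p<m. v $ p * f p) = (\<Sum>p<m. \<Sum>j<k. z j * (x p $ j * v $ p))"
      using fe by (intro sum.cong refl) (simp add: sum_distrib_left mult_ac)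
    also have "\<dots> = (\<Sum>j<k. \<Sum>p<m. z j * (x p $ j * v $ p))" by (rule sum.swap)
    also have "\<dots> = (\<Sum>j<k. z j * (\<Sum>p<m. x p $ j * v $ p))" by (simp add: sum_distrib_left)
    also have "\<dots> = 0" using lin by simp
    finally have s0: "(\<Sum>p<m. v $ p * (f p - \<mu>)) = 0" using sv by simp
    have "v $ p0 * (f p0 - \<mu>) = 0"
      by (rule sum_nonneg_0[OF _ terms s0]) (use p0 in auto)
    moreover have "0 < v $ p0 * (f p0 - \<mu>)" using p0 key[OF p0(1)] by simp
    ultimately show False by (metis less_irrefl)
  qed
  show ?thesis
    by (rule exI[of _ \<Sigma>], rule exI[of _ "e0m n"], rule exI[of _ "Es n"], rule exI[of _ "e0m n"])
       (use fin Q main in blast)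
qed

end
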